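(* For every integer $k\ge 4$, the set $S_k$ is not complete, and there exists an uncompletable word for $S_k$ of length $5k^2-17k+13$.
   Context: $\Sigma=\{a,b\}$. $S_k=\left(\Sigma^k\setminus\{ba^{k-1},b^{k-1}a\}\right)\cup\left(\Sigma^{k-1}\setminus\{a^{k-1},b^{k-1}\}\right)$. For a finite set $S$ of words, $\mathit{Fact}(S^* )$ is the set of all factors of words in $S^*$. $S$ is complete if $\mathit{Fact}(S^* )=\Sigma^*$; a word $w\in\Sigma^*\setminus\mathit{Fact}(S^* )$ is called uncompletable for $S$. *)

theory Defs
  imports Main
begin

datatype sym = a | b

type_synonym word = "sym list"

definition words_of_len :: "nat \<Rightarrow> word set" where
  "words_of_len n = {w. length w = n}"

definition S :: "nat \<Rightarrow> word set" where
  "S k = (words_of_len k - {b # replicate (k - 1) a, replicate (k - 1) b @ [a]})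
       \<union> (words_of_len (k - 1) - {replicate (k - 1) a, replicate (k - 1) b})"

definition star :: "word set \<Rightarrow> word set" where
  "star L = {concat ws | ws. set ws \<subseteq> L}"

definition Fact :: "word set \<Rightarrow> word set" where
  "Fact L = {w. \<exists>x\<in>L. \<exists>u v. x = u @ w @ v}"

definition complete :: "word set \<Rightarrow> bool" where
  "complete L \<longleftrightarrow> Fact (star L) = UNIV"

definition uncompletable :: "word set \<Rightarrow> word \<Rightarrow> bool" where
  "uncompletable L w \<longleftrightarrow> w \<notin> Fact (star L)"

end

theory Submission imports Defs begin

lemma len_S: "x \<in> S k \<Longrightarrow> length x = k \<or> length x = k - 1"
  by (auto simp: S_def words_of_len_def)

lemma chain:
  assumes k: "k \<ge> 2"
    and fin: "\<And>p. I p \<Longrightarrow> p + k \<le> length w"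
    and cl: "\<And>p L. I p \<Longrightarrow> p + L \<le> length w \<Longrightarrow> take L (drop p w) \<in> S k \<Longrightarrow> I (p+L)"
  shows "I p \<Longrightarrow> p \<le> length w \<Longrightarrow> drop p w @ v = concat ws \<Longrightarrow> set ws \<subseteq> S k \<Longrightarrow> False"
proof (induction ws arbitrary: p)
  case Nil
  then have "p = length w" by auto
  with fin[OF Nil(1)] k show ?case by simp
next
  case (Cons s ws)
  have sS: "s \<in> S k" using Cons by auto
  have Ls: "length s \<le> k" "length s \<ge> 1" using len_S[OF sS] k by auto
  show ?case
  proof (cases "p + length s \<le> length w")
    case True
    have e: "s @ concat ws = drop p w @ v" using Cons by simp
    have "take (length s) (s @ concat ws) = take (length s) (drop p w @ v)" using e by simp
    then have ts: "take (length s) (drop p w) = s" using True by simp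
    have "drop (length s) (s @ concat ws) = drop (length s) (drop p w @ v)" using e by simp
    then have ds: "concat ws = drop (p + length s) w @ v" using True by (simp add: add.commute)
    have "I (p + length s)" using cl[OF Cons(2) True] ts sS by simp
    then show ?thesis using Cons.IH[of "p + length s"] True ds Cons(5) by simp
  next
    case False
    then show ?thesis using fin[OF Cons(2)] Ls by simp
  qed
qed

lemma not_fact:
  assumes k: "k \<ge> 2" and lw: "length w \<ge> k"
    and init: "\<And>p. p < k \<Longrightarrow> I p"
    and fin: "\<And>p. I p \<Longrightarrow> p + k \<le> length w"
    and cl: "\<And>p L. I p \<Longrightarrow> p + L \<le> length w \<Longrightarrow> take L (drop p w) \<in> S k \<Longrightarrow> I (p+L)"
  shows "w \<notin> Fact (star (S k))"
proof
  assume "w \<in> Fact (star (S k))"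
  then obtain ws u v where ws: "set ws \<subseteq> S k" "concat ws = u @ w @ v"
    unfolding Fact_def star_def by blast
  have "\<And>u. set ws \<subseteq> S k \<Longrightarrow> concat ws = u @ w @ v \<Longrightarrow> False"
  proof (induction ws)
    case Nil then show ?case using lw k by auto
  next
    case (Cons s ws)
    have sS: "s \<in> S k" using Cons by auto
    have Ls: "length s \<le> k" using len_S[OF sS] k by auto
    have e: "s @ concat ws = u @ w @ v" using Cons by simp
    show ?case
    proof (cases "length s \<le> length u")
      case True
      have "drop (length s) (s @ concat ws) = drop (length s) (u @ w @ v)" using e by simp
      then have "concat ws = drop (length s) u @ w @ v" using True by simp
      then show ?thesis using Cons by auto
    next
      case False
      show ?thesis
      proof (cases "u = []")
        case True
        then have "drop 0 w @ v = concat (s # ws)" using e by simp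
        then show ?thesis using chain[of k I w, OF k fin cl, of 0 v "s#ws"] init[of 0] k Cons(2) by simp
      next
        case u: False
        define p where "p = length s - length u"
        have "length u > 0" using u by simp
        then have p: "p < k" "p \<le> length w" unfolding p_def using False Ls lw by linarith+
        have "drop (length s) (s @ concat ws) = drop (length s) (u @ w @ v)" using e by simp
        then have "concat ws = drop p w @ v" using False p by (simp add: p_def)
        then show ?thesis using chain[of k I w, OF k fin cl, of p v ws] init[OF p(1)] p Cons(2) by simp
      qed
    qed
  qed
  then show False using ws by blast
qed

lemma rep_eq: "(\<And>j. x\<le>j \<Longrightarrow> j<x+n \<Longrightarrow> f j = c) \<Longrightarrow> map f [x..<x+n] = replicate n c"
  by (rule nth_equalityI) auto

lemma aa_notS: "k \<ge> 2 \<Longrightarrow> (\<And>j. x\<le>j \<Longrightarrow> j<x+(k-1) \<Longrightarrow> f j = a) \<Longrightarrow> map f [x..<x+(k-1)] \<notin> S k"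
  using rep_eq[of x "k-1" f a] by (auto simp: S_def words_of_len_def)
lemma bb_notS: "k \<ge> 2 \<Longrightarrow> (\<And>j. x\<le>j \<Longrightarrow> j<x+(k-1) \<Longrightarrow> f j = b) \<Longrightarrow> map f [x..<x+(k-1)] \<notin> S k"
  using rep_eq[of x "k-1" f b] by (auto simp: S_def words_of_len_def)
lemma ba_notS: assumes "k \<ge> 2" "f x = b" "\<And>j. x<j \<Longrightarrow> j<x+k \<Longrightarrow> f j = a"
  shows "map f [x..<x+k] \<notin> S k"
proof -
  have "[x..<x+k] = x # [Suc x..<Suc x + (k-1)]" using assms(1) by (simp add: upt_conv_Cons)
  moreover have "map f [Suc x..<Suc x + (k-1)] = replicate (k-1) a"
    by (rule rep_eq) (use assms in auto)
  ultimately have "map f [x..<x+k] = b # replicate (k-1) a" using assms by simp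
  then show ?thesis using assms(1) by (auto simp: S_def words_of_len_def)
qed
lemma bba_notS: assumes "k \<ge> 2" "f (x+(k-1)) = a" "\<And>j. x\<le>j \<Longrightarrow> j<x+(k-1) \<Longrightarrow> f j = b"
  shows "map f [x..<x+k] \<notin> S k"
proof -
  have xk: "x + k = Suc (x + (k-1))" using assms(1) by simp
  have "[x..<x+k] = [x..<x+(k-1)] @ [x+(k-1)]" unfolding xk by simp
  moreover have "map f [x..<x+(k-1)] = replicate (k-1) b"
    by (rule rep_eq) (use assms in auto)
  ultimately have "map f [x..<x+k] = replicate (k-1) b @ [a]" using assms by simp
  then show ?thesis using assms(1) by (auto simp: S_def words_of_len_def)
qed


definition BL :: "nat \<Rightarrow> nat \<Rightarrow> nat \<Rightarrow> sym" where
 "BL k i s = (if s < k+i then a else if s < 3*k-3 then b else if s < 4*k-3 then a else b)"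

definition BI :: "nat \<Rightarrow> nat \<Rightarrow> nat \<Rightarrow> bool" where
 "BI k i t = ((i \<le> t \<and> t \<le> k-2) \<or> (k+i \<le> t \<and> t \<le> 2*k-2) \<or> (2*k+i \<le> t \<and> t \<le> 3*k-4) \<or> t = 3*k-3
   \<or> (3*k-1+i \<le> t \<and> t \<le> 4*k-5) \<or> t = 4*k-3 \<or> (i \<le> k-4 \<and> 4*k-2+i \<le> t \<and> t \<le> 5*k-5))"

definition B :: "nat \<Rightarrow> nat \<Rightarrow> nat" where "B k i = 2*k + (i-1)*(5*k-4)"

definition N :: "nat \<Rightarrow> nat" where "N k = B k (k-3) + (5*k-4) + 1"

definition W :: "nat \<Rightarrow> nat \<Rightarrow> sym" where
 "W k n = (if n < 2*k then (if n = 0 then b else if n \<le> k then a else b)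
   else if n < B k (k-3) + (5*k-4) then BL k ((n-2*k) div (5*k-4) + 1) ((n-2*k) mod (5*k-4)) else a)"

definition Inv :: "nat \<Rightarrow> nat \<Rightarrow> bool" where
 "Inv k n = ((n < 2*k \<and> n \<noteq> k) \<or> (\<exists>i t. 1 \<le> i \<and> i \<le> k-3 \<and> t < 5*k-4 \<and> n = B k i + t \<and> BI k i t))"

lemma B_mono: "i \<le> j \<Longrightarrow> B k i \<le> B k j"
  unfolding B_def by (simp add: mult_le_mono1 diff_le_mono)
lemma B_Suc: "1 \<le> i \<Longrightarrow> B k (i+1) = B k i + (5*k-4)"
  unfolding B_def by (cases i) simp_all
lemma B_1: "B k 1 = 2*k" unfolding B_def by simp

lemma Wq: assumes "4 \<le> k" "1 \<le> i" "i \<le> k-3" "B k i \<le> j" "j < B k i + (5*k-4)"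
  shows "W k j = BL k i (j - B k i)"
proof -
  define s where "s = j - B k i"
  define M where "M = 5*k-4"
  have M0: "M > 0" using assms(1) by (simp add: M_def)
  have j: "j = 2*k + ((i-1)*M + s)" using assms(4) by (simp add: s_def B_def M_def)
  have sM: "s < M" using assms(4,5) by (simp add: s_def M_def)
  have "B k i \<le> B k (k-3)" using B_mono assms(3) by blast
  then have lt: "j < B k (k-3) + M" using assms(5) by (simp add: M_def)
  have d: "((i-1)*M + s) div M = i - 1" using sM M0 by simp
  have m: "((i-1)*M + s) mod M = s" using sM by simp
  have "W k j = BL k i s" unfolding W_def using lt d m assms(2) by (simp add: j M_def)
  then show ?thesis by (simp add: s_def)
qed

lemma Wlast: "4 \<le> k \<Longrightarrow> W k (B k (k-3) + (5*k-4)) = a"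
  unfolding W_def by (simp add: B_def)

lemma Inv_blk: "1 \<le> i \<Longrightarrow> i \<le> k-3 \<Longrightarrow> t < 5*k-4 \<Longrightarrow> BI k i t \<Longrightarrow> Inv k (B k i + t)"
  unfolding Inv_def by blast


lemma BL_a1: "s < k+i \<Longrightarrow> BL k i s = a" by (simp add: BL_def)
lemma BL_b1: "k+i \<le> s \<Longrightarrow> s < 3*k-3 \<Longrightarrow> BL k i s = b" by (simp add: BL_def)
lemma BL_a2: "i+3 \<le> k \<Longrightarrow> 3*k-3 \<le> s \<Longrightarrow> s < 4*k-3 \<Longrightarrow> BL k i s = a" by (simp add: BL_def)
lemma BL_b2: "i+3 \<le> k \<Longrightarrow> 4*k-3 \<le> s \<Longrightarrow> BL k i s = b" by (simp add: BL_def)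

lemma BI_1: "i \<le> t \<Longrightarrow> t \<le> k-2 \<Longrightarrow> BI k i t" by (simp add: BI_def)
lemma BI_2: "k+i \<le> t \<Longrightarrow> t \<le> 2*k-2 \<Longrightarrow> BI k i t" by (simp add: BI_def)
lemma BI_3: "2*k+i \<le> t \<Longrightarrow> t \<le> 3*k-4 \<Longrightarrow> BI k i t" by (simp add: BI_def)
lemma BI_4: "t = 3*k-3 \<Longrightarrow> BI k i t" by (simp add: BI_def)
lemma BI_5: "3*k-1+i \<le> t \<Longrightarrow> t \<le> 4*k-5 \<Longrightarrow> BI k i t" by (simp add: BI_def)
lemma BI_6: "t = 4*k-3 \<Longrightarrow> BI k i t" by (simp add: BI_def)
lemma BI_7: "i \<le> k-4 \<Longrightarrow> 4*k-2+i \<le> t \<Longrightarrow> t \<le> 5*k-5 \<Longrightarrow> BI k i t" by (simp add: BI_def)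

lemma blk_closure:
  assumes k4: "4 \<le> k" and i1: "1 \<le> i" and ik: "i \<le> k-3" and tM: "t < 5*k-4" and bi: "BI k i t"
    and L: "L = k-1 \<or> L = k"
    and v: "map (W k) [B k i + t..<B k i + t + L] \<in> S k"
  shows "Inv k (B k i + t + L)"
proof -
  define q where "q = B k i"
  have k2: "k \<ge> 2" using k4 by simp
  have i3: "i+3 \<le> k" using ik k4 by simp
  have Wc: "\<And>j c. q \<le> j \<Longrightarrow> j < q + (5*k-4) \<Longrightarrow> BL k i (j-q) = c \<Longrightarrow> W k j = c"
    using Wq[OF k4 i1 ik] unfolding q_def by simp
  have Wn: "\<And>j c. i < k-3 \<Longrightarrow> q + (5*k-4) \<le> j \<Longrightarrow> j < q + (5*k-4) + (5*k-4) \<Longrightarrow> BL k (i+1) (j - q - (5*k-4)) = c \<Longrightarrow> W k j = c"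
  proof -
    fix j c assume h: "i < k-3" "q + (5*k-4) \<le> j" "j < q + (5*k-4) + (5*k-4)" "BL k (i+1) (j - q - (5*k-4)) = c"
    have "W k j = BL k (i+1) (j - B k (i+1))"
      using h B_Suc[OF i1] by (intro Wq) (auto simp: q_def)
    then show "W k j = c" using h B_Suc[OF i1] by (simp add: q_def)
  qed
  have Wl: "i = k-3 \<Longrightarrow> W k (q + (5*k-4)) = a" using Wlast[OF k4] by (simp add: q_def)
  have Ih: "\<And>s. s < 5*k-4 \<Longrightarrow> BI k i s \<Longrightarrow> Inv k (q + s)"
    using Inv_blk[OF i1 ik] by (simp add: q_def)
  have T: "\<And>s. s < 5*k-4 \<Longrightarrow> BI k i s \<Longrightarrow> q + t + L = q + s \<Longrightarrow> Inv k (q+t+L)"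
    using Ih by (metis add.assoc)
  have Tn: "\<And>s. i < k-3 \<Longrightarrow> s < 5*k-4 \<Longrightarrow> BI k (i+1) s \<Longrightarrow> q + t + L = q + (5*k-4) + s \<Longrightarrow> Inv k (q+t+L)"
    using Inv_blk[of "i+1" k] B_Suc[OF i1] by (simp add: q_def)
  have v': "map (W k) [q + t..<q + t + L] \<in> S k" using v by (simp add: q_def)
  have goal: "Inv k (q + t + L)"
    using L
  proof
    assume L: "L = k-1"
    have v: "map (W k) [q + t..<q + t + (k-1)] \<in> S k" using v' L by simp
    from bi show ?thesis unfolding BI_def
    proof (elim disjE conjE)
      assume h: "i \<le> t" "t \<le> k-2"
      show ?thesis
      proof (cases "t = i")
        case True
        have "map (W k) [q+t..<q+t+(k-1)] \<notin> S k"
        proof (rule aa_notS[OF k2])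
          fix j assume "q+t \<le> j" "j < q+t+(k-1)"
          then show "W k j = a" using True k4 ik by (-) (rule Wc, arith, arith, rule BL_a1, arith)
        qed
        then show ?thesis using v by simp
      next
        case False
        show ?thesis using h False k4 L ik by (-) (rule T[of "t+(k-1)"], arith, rule BI_2, arith+)
      qed
    next
      assume h: "k+i \<le> t" "t \<le> 2*k-2"
      have "map (W k) [q+t..<q+t+(k-1)] \<notin> S k"
      proof (rule bb_notS[OF k2])
        fix j assume "q+t \<le> j" "j < q+t+(k-1)"
        then show "W k j = b" using h k4 ik by (-) (rule Wc, arith, arith, rule BL_b1, arith+)
      qed
      then show ?thesis using v by simp
    next
      assume h: "2*k+i \<le> t" "t \<le> 3*k-4"
      show ?thesis using h k4 L ik by (-) (rule T[of "t+(k-1)"], arith, rule BI_5, arith+)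
    next
      assume h: "t = 3*k-3"
      have "map (W k) [q+t..<q+t+(k-1)] \<notin> S k"
      proof (rule aa_notS[OF k2])
        fix j assume "q+t \<le> j" "j < q+t+(k-1)"
        then show "W k j = a" using h k4 i3 by (-) (rule Wc, arith, arith, rule BL_a2, arith+)
      qed
      then show ?thesis using v by simp
    next
      assume h: "3*k-1+i \<le> t" "t \<le> 4*k-5"
      then have i4: "i \<le> k-4" using k4 by simp
      show ?thesis using h i4 k4 L ik by (-) (rule T[of "t+(k-1)"], arith, rule BI_7, arith+)
    next
      assume h: "t = 4*k-3"
      have "map (W k) [q+t..<q+t+(k-1)] \<notin> S k"
      proof (rule bb_notS[OF k2])
        fix j assume "q+t \<le> j" "j < q+t+(k-1)"
        then show "W k j = b" using h k4 i3 by (-) (rule Wc, arith, arith, rule BL_b2, arith+)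
      qed
      then show ?thesis using v by simp
    next
      assume h: "i \<le> k-4" "4*k-2+i \<le> t" "t \<le> 5*k-5"
      show ?thesis using h k4 L ik by (-) (rule Tn[of "t + (k-1) - (5*k-4)"], arith, arith, rule BI_1, arith+)
    qed
  next
    assume L: "L = k"
    have v: "map (W k) [q + t..<q + t + k] \<in> S k" using v' L by simp
    from bi show ?thesis unfolding BI_def
    proof (elim disjE conjE)
      assume h: "i \<le> t" "t \<le> k-2"
      show ?thesis using h k4 L ik by (-) (rule T[of "t+k"], arith, rule BI_2, arith+)
    next
      assume h: "k+i \<le> t" "t \<le> 2*k-2"
      show ?thesis
      proof (cases "t = 2*k-2")
        case True
        have "map (W k) [q+t..<q+t+k] \<notin> S k"
        proof (rule bba_notS[OF k2])
          show "W k (q + t + (k - 1)) = a" using True k4 i3 by (-) (rule Wc, arith, arith, rule BL_a2, arith+)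
          fix j assume "q+t \<le> j" "j < q+t+(k-1)"
          then show "W k j = b" using True h k4 ik by (-) (rule Wc, arith, arith, rule BL_b1, arith+)
        qed
        then show ?thesis using v by simp
      next
        case False
        show ?thesis
        proof (cases "t + k \<le> 3*k-4")
          case True
          show ?thesis using h True k4 L ik by (-) (rule T[of "t+k"], arith, rule BI_3, arith+)
        next
          case F2: False
          show ?thesis using h False F2 k4 L ik by (-) (rule T[of "t+k"], arith, rule BI_4, arith+)
        qed
      qed
    next
      assume h: "2*k+i \<le> t" "t \<le> 3*k-4"
      show ?thesis
      proof (cases "t = 3*k-4")
        case True
        have "map (W k) [q+t..<q+t+k] \<notin> S k"
        proof (rule ba_notS[OF k2])
          show "W k (q + t) = b" using True k4 ik by (-) (rule Wc, arith, arith, rule BL_b1, arith+)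
          fix j assume "q+t < j" "j < q+t+k"
          then show "W k j = a" using True h k4 i3 by (-) (rule Wc, arith, arith, rule BL_a2, arith+)
        qed
        then show ?thesis using v by simp
      next
        case False
        show ?thesis using h False k4 L ik by (-) (rule T[of "t+k"], arith, rule BI_5, arith+)
      qed
    next
      assume h: "t = 3*k-3"
      show ?thesis using h k4 L ik by (-) (rule T[of "t+k"], arith, rule BI_6, arith+)
    next
      assume h: "3*k-1+i \<le> t" "t \<le> 4*k-5"
      then have i4: "i \<le> k-4" using k4 by simp
      show ?thesis using h i4 k4 L ik by (-) (rule T[of "t+k"], arith, rule BI_7, arith+)
    next
      assume h: "t = 4*k-3"
      have "map (W k) [q+t..<q+t+k] \<notin> S k"
      proof (rule bba_notS[OF k2])
        have e: "q + t + (k - 1) = q + (5*k-4)" using h k4 by simp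
        show "W k (q + t + (k - 1)) = a"
        proof (cases "i = k-3")
          case True then show ?thesis unfolding e using Wl by simp
        next
          case False
          show ?thesis unfolding e using False ik k4 by (-) (rule Wn, arith, arith, arith, rule BL_a1, arith)
        qed
        fix j assume "q+t \<le> j" "j < q+t+(k-1)"
        then show "W k j = b" using h k4 i3 by (-) (rule Wc, arith, arith, rule BL_b2, arith+)
      qed
      then show ?thesis using v by simp
    next
      assume h: "i \<le> k-4" "4*k-2+i \<le> t" "t \<le> 5*k-5"
      show ?thesis
      proof (cases "t = 5*k-5")
        case True
        have "map (W k) [q+t..<q+t+k] \<notin> S k"
        proof (rule ba_notS[OF k2])
          show "W k (q + t) = b" using True k4 i3 by (-) (rule Wc, arith, arith, rule BL_b2, arith+)
          fix j assume "q+t < j" "j < q+t+k"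
          then show "W k j = a" using True h k4 by (-) (rule Wn, arith, arith, arith, rule BL_a1, arith)
        qed
        then show ?thesis using v by simp
      next
        case False
        show ?thesis using h False k4 L ik by (-) (rule Tn[of "t + k - (5*k-4)"], arith, arith, rule BI_1, arith+)
      qed
    qed
  qed
  then show ?thesis by (simp add: q_def)
qed


lemma W_pre: "n < 2*k \<Longrightarrow> W k n = (if n = 0 then b else if n \<le> k then a else b)"
  unfolding W_def by simp

lemma W_b1: "4 \<le> k \<Longrightarrow> 2*k \<le> n \<Longrightarrow> n < 2*k + (5*k-4) \<Longrightarrow> W k n = BL k 1 (n - 2*k)"
  using Wq[of k 1 n, unfolded B_1] by simp

lemma Inv_b1: "4 \<le> k \<Longrightarrow> t < 5*k-4 \<Longrightarrow> BI k 1 t \<Longrightarrow> Inv k (2*k + t)"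
  using Inv_blk[of 1 k t, unfolded B_1] by simp

lemma pre_closure:
  assumes k4: "4 \<le> k" and p: "p < 2*k" "p \<noteq> k" and L: "L = k-1 \<or> L = k"
    and v: "map (W k) [p..<p + L] \<in> S k"
  shows "Inv k (p + L)"
proof -
  have k2: "k \<ge> 2" using k4 by simp
  have Ip: "\<And>n. n < 2*k \<Longrightarrow> n \<noteq> k \<Longrightarrow> Inv k n" by (simp add: Inv_def)
  show ?thesis using L
  proof
    assume L: "L = k-1"
    have v: "map (W k) [p..<p + (k-1)] \<in> S k" using v L by simp
    show ?thesis
    proof (cases "p \<le> k-1")
      case True
      show ?thesis
      proof (cases "p = 1")
        case p1: True
        have "map (W k) [p..<p+(k-1)] \<notin> S k"
        proof (rule aa_notS[OF k2])
          fix j assume "p \<le> j" "j < p+(k-1)"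
          then show "W k j = a" using p1 k4 by (subst W_pre) auto
        qed
        then show ?thesis using v by simp
      next
        case False
        then show ?thesis using True L k4 by (intro Ip) auto
      qed
    next
      case False
      then have pk: "k+1 \<le> p" using p by simp
      show ?thesis
      proof (cases "p = k+1")
        case True
        have "map (W k) [p..<p+(k-1)] \<notin> S k"
        proof (rule bb_notS[OF k2])
          fix j assume "p \<le> j" "j < p+(k-1)"
          then show "W k j = b" using True k4 by (subst W_pre) auto
        qed
        then show ?thesis using v by simp
      next
        case F2: False
        have e: "p + L = 2*k + (p + (k-1) - 2*k)" using pk F2 L by simp
        show ?thesis unfolding e
          by (rule Inv_b1[OF k4], use pk F2 p k4 in arith, rule BI_1, use pk F2 p k4 in arith, use pk F2 p k4 in arith)
      qed
    qed
  next
    assume L: "L = k"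
    have v: "map (W k) [p..<p + k] \<in> S k" using v L by simp
    show ?thesis
    proof (cases "p = 0")
      case True
      have "map (W k) [p..<p+k] \<notin> S k"
      proof (rule ba_notS[OF k2])
        show "W k p = b" using True k4 by (subst W_pre) auto
        fix j assume "p < j" "j < p+k"
        then show "W k j = a" using True k4 by (subst W_pre) auto
      qed
      then show ?thesis using v by simp
    next
      case F0: False
      show ?thesis
      proof (cases "p \<le> k-1")
        case True
        then show ?thesis using F0 L k4 by (intro Ip) auto
      next
        case False
        then have pk: "k+1 \<le> p" using p by simp
        show ?thesis
        proof (cases "p = 2*k-1")
          case True
          have "map (W k) [p..<p+k] \<notin> S k"
          proof (rule ba_notS[OF k2])
            show "W k p = b" using True k4 by (subst W_pre) auto
            fix j assume j: "p < j" "j < p+k"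
            then have "W k j = BL k 1 (j - 2*k)" using True k4 by (intro W_b1) auto
            also have "\<dots> = a" using j True k4 by (intro BL_a1) arith
            finally show "W k j = a" .
          qed
          then show ?thesis using v by simp
        next
          case F2: False
          have e: "p + L = 2*k + (p + k - 2*k)" using pk L by simp
          show ?thesis unfolding e
            by (rule Inv_b1[OF k4], use pk F2 p k4 in arith, rule BI_1, use pk F2 p k4 in arith, use pk F2 p k4 in arith)
        qed
      qed
    qed
  qed
qed

definition wd :: "nat \<Rightarrow> word" where "wd k = map (W k) [0..<N k]"

lemma len_wd: "length (wd k) = N k" by (simp add: wd_def)

lemma piece_wd: "p + L \<le> N k \<Longrightarrow> take L (drop p (wd k)) = map (W k) [p..<p+L]"
  by (simp add: wd_def drop_map take_map)

lemma Inv_fin: assumes k4: "4 \<le> k" and I: "Inv k p" shows "p + k \<le> N k"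
proof -
  have B1: "B k 1 \<le> B k (k-3)" using k4 by (intro B_mono) simp
  from I show ?thesis unfolding Inv_def
  proof (elim disjE exE conjE)
    assume "p < 2*k"
    then show ?thesis using B1 k4 by (simp add: N_def B_1)
  next
    fix i t assume h: "1 \<le> i" "i \<le> k-3" "t < 5*k-4" "p = B k i + t" "BI k i t"
    show ?thesis
    proof (cases "i = k-3")
      case True
      then have "t \<le> 4*k-3" using h(5) k4 unfolding BI_def by auto
      then show ?thesis using h True k4 by (simp add: N_def)
    next
      case False
      have "B k (i+1) \<le> B k (k-3)" using False h by (intro B_mono) simp
      then show ?thesis using h B_Suc[OF h(1)] k4 by (simp add: N_def)
    qed
  qed
qed

lemma Inv_cl: assumes k4: "4 \<le> k" and I: "Inv k p" and le: "p + L \<le> length (wd k)"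
  and v: "take L (drop p (wd k)) \<in> S k"
  shows "Inv k (p+L)"
proof -
  have le': "p + L \<le> N k" using le len_wd by simp
  have v': "map (W k) [p..<p+L] \<in> S k" using v piece_wd[OF le'] by simp
  have "length (map (W k) [p..<p+L]) = L" by simp
  then have L: "L = k-1 \<or> L = k" using len_S[OF v'] by auto
  from I show ?thesis unfolding Inv_def[of k p]
  proof (elim disjE exE conjE)
    assume "p < 2*k" "p \<noteq> k"
    then show ?thesis using pre_closure[OF k4 _ _ L v'] by simp
  next
    fix i t assume h: "1 \<le> i" "i \<le> k-3" "t < 5*k-4" "p = B k i + t" "BI k i t"
    show ?thesis using blk_closure[OF k4 h(1,2,3,5) L] v' h(4) by simp
  qed
qed

lemma N_int: "4 \<le> k \<Longrightarrow> int (N k) = 5 * int k ^ 2 - 17 * int k + 13"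
proof -
  assume "4 \<le> k"
  then obtain m where m: "k = m + 4" by (metis add.commute le_Suc_ex)
  have "N k = 5*m*m + 23*m + 25"
    unfolding N_def B_def m by (simp add: algebra_simps)
  then show ?thesis unfolding m by (simp add: algebra_simps power2_eq_square)
qed

theorem theorem1:
  fixes k :: nat
  assumes "k \<ge> 4"
  shows "\<not> complete (S k) \<and>
         (\<exists>w. uncompletable (S k) w \<and> int (length w) = 5 * int k ^ 2 - 17 * int k + 13)"
proof -
  have k2: "k \<ge> 2" using assms by simp
  have B1: "B k 1 \<le> B k (k-3)" using assms by (intro B_mono) simp
  have lw: "length (wd k) \<ge> k" using B1 assms by (simp add: len_wd N_def B_1)
  have nf: "wd k \<notin> Fact (star (S k))"
  proof (rule not_fact[OF k2 lw, of "Inv k"])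
    show "\<And>p. p < k \<Longrightarrow> Inv k p" by (simp add: Inv_def)
    show "\<And>p. Inv k p \<Longrightarrow> p + k \<le> length (wd k)" using Inv_fin[OF assms] by (simp add: len_wd)
    show "\<And>p L. Inv k p \<Longrightarrow> p + L \<le> length (wd k) \<Longrightarrow> take L (drop p (wd k)) \<in> S k \<Longrightarrow> Inv k (p + L)"
      using Inv_cl[OF assms] by blast
  qed
  have "\<not> complete (S k)" using nf unfolding complete_def by auto
  moreover have "uncompletable (S k) (wd k)" using nf unfolding uncompletable_def by simp
  moreover have "int (length (wd k)) = 5 * int k ^ 2 - 17 * int k + 13"
    using N_int[OF assms] by (simp add: len_wd)
  ultimately show ?thesis by blast
qed

end
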